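(* Let $\tilde L$ be a minimum-size counterexample. Then the greatest element $1_{\tilde L}$ is join-reducible in $\tilde L$, i.e. it upper covers at least two elements.
   Context: For a poset $P$, $x$ upper covers $y$ if $y<x$ with nothing strictly between. Join-irreducible: upper covers exactly one element; join-reducible: upper covers more than one element. For $x\in P$, ${\uparrow}x=\{y: x\le y\}$. A counterexample is a finite lattice $L$ with $|L|>1$ in which every join-irreducible $j$ satisfies $|{\uparrow}j|>|L|/2$; a minimum-size counterexample is a counterexample $\tilde L$ such that no counterexample has fewer elements. *)

theory Defs
  imports Complex_Main
begin

definition is_poset :: "'a set \<Rightarrow> ('a \<Rightarrow> 'a \<Rightarrow> bool) \<Rightarrow> bool" where
  "is_poset S le \<longleftrightarrow>
     (\<forall>x\<in>S. le x x) \<and>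
     (\<forall>x\<in>S. \<forall>y\<in>S. le x y \<and> le y x \<longrightarrow> x = y) \<and>
     (\<forall>x\<in>S. \<forall>y\<in>S. \<forall>z\<in>S. le x y \<and> le y z \<longrightarrow> le x z)"

definition is_lub :: "'a set \<Rightarrow> ('a \<Rightarrow> 'a \<Rightarrow> bool) \<Rightarrow> 'a \<Rightarrow> 'a \<Rightarrow> 'a \<Rightarrow> bool" where
  "is_lub S le x y z \<longleftrightarrow> z \<in> S \<and> le x z \<and> le y z \<and> (\<forall>w\<in>S. le x w \<and> le y w \<longrightarrow> le z w)"

definition is_glb :: "'a set \<Rightarrow> ('a \<Rightarrow> 'a \<Rightarrow> bool) \<Rightarrow> 'a \<Rightarrow> 'a \<Rightarrow> 'a \<Rightarrow> bool" where
  "is_glb S le x y z \<longleftrightarrow> z \<in> S \<and> le z x \<and> le z y \<and> (\<forall>w\<in>S. le w x \<and> le w y \<longrightarrow> le w z)"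

definition finite_lattice :: "'a set \<Rightarrow> ('a \<Rightarrow> 'a \<Rightarrow> bool) \<Rightarrow> bool" where
  "finite_lattice S le \<longleftrightarrow> finite S \<and> S \<noteq> {} \<and> is_poset S le \<and>
     (\<forall>x\<in>S. \<forall>y\<in>S. (\<exists>z. is_lub S le x y z) \<and> (\<exists>z. is_glb S le x y z))"

definition upper_covers :: "'a set \<Rightarrow> ('a \<Rightarrow> 'a \<Rightarrow> bool) \<Rightarrow> 'a \<Rightarrow> 'a \<Rightarrow> bool" where
  "upper_covers S le x y \<longleftrightarrow> x \<in> S \<and> y \<in> S \<and> le y x \<and> y \<noteq> x \<and>
     \<not> (\<exists>z\<in>S. le y z \<and> le z x \<and> z \<noteq> y \<and> z \<noteq> x)"

definition lower_covers_set :: "'a set \<Rightarrow> ('a \<Rightarrow> 'a \<Rightarrow> bool) \<Rightarrow> 'a \<Rightarrow> 'a set" where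
  "lower_covers_set S le x = {y \<in> S. upper_covers S le x y}"

definition join_irreducible :: "'a set \<Rightarrow> ('a \<Rightarrow> 'a \<Rightarrow> bool) \<Rightarrow> 'a \<Rightarrow> bool" where
  "join_irreducible S le x \<longleftrightarrow> x \<in> S \<and> card (lower_covers_set S le x) = 1"

definition join_reducible :: "'a set \<Rightarrow> ('a \<Rightarrow> 'a \<Rightarrow> bool) \<Rightarrow> 'a \<Rightarrow> bool" where
  "join_reducible S le x \<longleftrightarrow> x \<in> S \<and> card (lower_covers_set S le x) > 1"

definition up_set :: "'a set \<Rightarrow> ('a \<Rightarrow> 'a \<Rightarrow> bool) \<Rightarrow> 'a \<Rightarrow> 'a set" where
  "up_set S le x = {y \<in> S. le x y}"

definition counterexample :: "'a set \<Rightarrow> ('a \<Rightarrow> 'a \<Rightarrow> bool) \<Rightarrow> bool" where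
  "counterexample S le \<longleftrightarrow> finite_lattice S le \<and> card S > 1 \<and>
     (\<forall>j\<in>S. join_irreducible S le j \<longrightarrow> real (card (up_set S le j)) > real (card S) / 2)"

text \<open>Minimality is against all counterexamples; every finite lattice is isomorphic to one
  carried by a subset of nat, so quantifying over nat-carried lattices is sufficient.\<close>
definition min_counterexample :: "'a set \<Rightarrow> ('a \<Rightarrow> 'a \<Rightarrow> bool) \<Rightarrow> bool" where
  "min_counterexample S le \<longleftrightarrow> counterexample S le \<and>
     \<not> (\<exists>(S' :: nat set) le'. counterexample S' le' \<and> card S' < card S)"

end

theory Submission
  imports Defs
begin

theorem corollary2p4:
  fixes S :: "'a set" and le :: "'a \<Rightarrow> 'a \<Rightarrow> bool" and top :: 'a
  assumes "min_counterexample S le"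
    and "top \<in> S" and "\<forall>x\<in>S. le x top"
  shows "join_reducible S le top"
proof -
  have ce: "counterexample S le" using assms(1) by (simp add: min_counterexample_def)
  hence fin: "finite S" and c1: "card S > 1" and pos: "is_poset S le"
    and irr: "\<forall>j\<in>S. join_irreducible S le j \<longrightarrow> real (card (up_set S le j)) > real (card S) / 2"
    by (auto simp: counterexample_def finite_lattice_def)
  have refl: "\<forall>x\<in>S. le x x" and anti: "\<forall>x\<in>S. \<forall>y\<in>S. le x y \<and> le y x \<longrightarrow> x = y"
    and trans: "\<forall>x\<in>S. \<forall>y\<in>S. \<forall>z\<in>S. le x y \<and> le y z \<longrightarrow> le x z"
    using pos unfolding is_poset_def by blast+
  have up: "up_set S le top = {top}"
    unfolding up_set_def using assms(2,3) anti refl by blast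
  have "\<not> join_irreducible S le top"
  proof
    assume "join_irreducible S le top"
    with irr assms(2) have "real (card (up_set S le top)) > real (card S) / 2" by blast
    with up c1 show False by simp
  qed
  hence n1: "card (lower_covers_set S le top) \<noteq> 1"
    using assms(2) by (simp add: join_irreducible_def)
  obtain y where y: "y \<in> S" "y \<noteq> top"
  proof -
    have "S - {top} \<noteq> {}"
    proof
      assume "S - {top} = {}"
      hence "S \<subseteq> {top}" by blast
      hence "card S \<le> card {top}" by (rule card_mono[rotated]) simp
      hence "card S \<le> 1" by simp
      with c1 show False by simp
    qed
    thus ?thesis using that by blast
  qed
  let ?P = "\<lambda>z. z \<in> S \<and> z \<noteq> top"
  obtain z where z: "?P z" and zmin: "\<forall>w. ?P w \<longrightarrow> card (up_set S le z) \<le> card (up_set S le w)"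
    using ex_has_least_nat[of ?P y "\<lambda>z. card (up_set S le z)"] y by blast
  have cov: "upper_covers S le top z"
    unfolding upper_covers_def
  proof (intro conjI)
    show "top \<in> S" "z \<in> S" "le z top" "z \<noteq> top" using z assms by auto
    show "\<not> (\<exists>w\<in>S. le z w \<and> le w top \<and> w \<noteq> z \<and> w \<noteq> top)"
    proof
      assume "\<exists>w\<in>S. le z w \<and> le w top \<and> w \<noteq> z \<and> w \<noteq> top"
      then obtain w where w: "w \<in> S" "le z w" "w \<noteq> z" "w \<noteq> top" by blast
      have sub: "up_set S le w \<subseteq> up_set S le z"
      proof
        fix u assume "u \<in> up_set S le w"
        hence "u \<in> S" "le w u" by (auto simp: up_set_def)
        moreover have "le z u" using trans w z \<open>u \<in> S\<close> \<open>le w u\<close> by blast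
        ultimately show "u \<in> up_set S le z" by (simp add: up_set_def)
      qed
      have "z \<in> up_set S le z" using z refl by (simp add: up_set_def)
      moreover have "z \<notin> up_set S le w" unfolding up_set_def using w z anti by blast
      ultimately have "up_set S le w \<subset> up_set S le z" using sub by blast
      hence "card (up_set S le w) < card (up_set S le z)"
        by (rule psubset_card_mono[rotated]) (use fin in \<open>simp add: up_set_def\<close>)
      with zmin w show False by force
    qed
  qed
  have finl: "finite (lower_covers_set S le top)" using fin by (simp add: lower_covers_set_def)
  have "z \<in> lower_covers_set S le top" using cov z by (simp add: lower_covers_set_def)
  hence "card (lower_covers_set S le top) \<noteq> 0" using finl by auto
  with n1 assms(2) show ?thesis by (simp add: join_reducible_def)
qed

end
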